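(* Let $t\ge 0$ be an integer and consider any complete run of the exponential-edge chip-firing process starting with $2^{t+2}$ chips with distinct labels at site $0$. For $0\le k\le t$ and $2\le j\le 2(t-k)+3$, after the $j$-th firing move at site $k$ (counted from the start), the $2^{t-k}$ chips with the largest labels are all at positions greater than $k$. Similarly, for $-t\le k\le 0$ and $2\le j\le 2(t-|k|)+3$, after the $j$-th firing move at site $k$, the $2^{t+k}$ chips with the smallest labels are all at positions less than $k$.
   Context: Exponential-edge graph with parameter $t$: the vertex set is $\mathbb{Z}$; for each $0\le k\le t$ there are $2^{t-k}$ parallel edges between $k$ and $k+1$ and $2^{t-k}$ parallel edges between $-k$ and $-k-1$; all other pairs of adjacent integers are joined by a single edge. If a site has $a$ edges to its left neighbor and $b$ edges to its right neighbor, a firing move at that site chooses $a+b$ chips present there and sends the $a$ smallest of them to the left neighbor and the $b$ largest to the right neighbor. A complete run is a sequence of legal firing moves ending in a configuration where no firing move is possible. In such a run, site $k$ fires exactly $2(t-|k|)+3$ times for $-t-1\le k\le t+1$. *)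

theory Defs
  imports Main
begin

text \<open>Chips are labelled 0..N-1 (labels ordered as natural numbers).
  A configuration assigns each chip label its position in the integers.
  ew t m = number of parallel edges between m and m+1.\<close>

definition ew :: "nat \<Rightarrow> int \<Rightarrow> nat" where
  "ew t m = (if 0 \<le> m \<and> m \<le> int t then 2 ^ nat (int t - m)
             else if - int t - 1 \<le> m \<and> m \<le> -1 then 2 ^ nat (int t + m + 1)
             else 1)"

definition fire :: "nat \<Rightarrow> nat \<Rightarrow> (nat \<Rightarrow> int) \<Rightarrow> int \<Rightarrow> nat set \<Rightarrow> (nat \<Rightarrow> int) \<Rightarrow> bool" where
  "fire t N c k S c' \<longleftrightarrow>
     S \<subseteq> {i. i < N \<and> c i = k} \<and> card S = ew t (k - 1) + ew t k \<and>
     c' = (\<lambda>i. if i \<in> S then (if card {j\<in>S. j < i} < ew t (k - 1) then k - 1 else k + 1)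
               else c i)"

definition stable :: "nat \<Rightarrow> nat \<Rightarrow> (nat \<Rightarrow> int) \<Rightarrow> bool" where
  "stable t N c \<longleftrightarrow> (\<forall>k. card {i. i < N \<and> c i = k} < ew t (k - 1) + ew t k)"

text \<open>A complete run from all N chips at site 0: moves!n = (site, chosen chips),
  cs!n = configuration before move n, last cs = final (stable) configuration.\<close>
definition complete_run :: "nat \<Rightarrow> nat \<Rightarrow> (int \<times> nat set) list \<Rightarrow> (nat \<Rightarrow> int) list \<Rightarrow> bool" where
  "complete_run t N moves cs \<longleftrightarrow>
     length cs = Suc (length moves) \<and> cs ! 0 = (\<lambda>_. 0) \<and>
     (\<forall>n < length moves. fire t N (cs ! n) (fst (moves ! n)) (snd (moves ! n)) (cs ! Suc n)) \<and>
     stable t N (last cs)"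

end

theory Submission
  imports Defs
begin


lemma ew_pos: "0 < ew t m" by (simp add: ew_def)

lemma ew_pos_range: "0 \<le> m \<Longrightarrow> m \<le> int t \<Longrightarrow> ew t m = 2 ^ nat (int t - m)"
  by (simp add: ew_def)

lemma ew_big: "int t + 1 \<le> m \<Longrightarrow> ew t m = 1"
  by (simp add: ew_def)

lemma ew_small: "m \<le> - int t - 2 \<Longrightarrow> ew t m = 1"
  by (simp add: ew_def)

lemma ew_neg: "- int t - 1 \<le> m \<Longrightarrow> m \<le> -1 \<Longrightarrow> ew t m = 2 ^ nat (int t + m + 1)"
  by (simp add: ew_def)

lemma ew_step_pos: "1 \<le> s \<Longrightarrow> s \<le> int t \<Longrightarrow> ew t (s - 1) = 2 * ew t s"
proof -
  assume a: "1 \<le> s" "s \<le> int t"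
  have "nat (int t - (s - 1)) = Suc (nat (int t - s))" using a by linarith
  thus ?thesis using a by (simp add: ew_def)
qed

lemma ew_step_neg: "- int t \<le> s \<Longrightarrow> s \<le> -1 \<Longrightarrow> ew t s = 2 * ew t (s - 1)"
proof -
  assume a: "- int t \<le> s" "s \<le> -1"
  have "nat (int t + s + 1) = Suc (nat (int t + (s - 1) + 1))" using a by linarith
  thus ?thesis using a by (simp add: ew_def)
qed

lemma ew_0: "ew t 0 = 2 ^ t" by (simp add: ew_def)
lemma ew_m1: "ew t (-1) = 2 ^ t" by (simp add: ew_def)
lemma ew_t: "ew t (int t) = 1" by (simp add: ew_def)
lemma ew_mt: "ew t (- int t - 1) = 1" by (simp add: ew_def)

definition RR :: "nat \<Rightarrow> (nat \<Rightarrow> int) \<Rightarrow> int \<Rightarrow> nat" where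
  "RR N c k = card {i. i < N \<and> k < c i}"

definition PP :: "nat \<Rightarrow> (nat \<Rightarrow> int) \<Rightarrow> int \<Rightarrow> nat" where
  "PP N c k = card {i. i < N \<and> c i = k}"

lemma RR_split: "RR N c (k - 1) = PP N c k + RR N c k"
proof -
  have "{i. i < N \<and> k - 1 < c i} = {i. i < N \<and> c i = k} \<union> {i. i < N \<and> k < c i}" by auto
  moreover have "{i. i < N \<and> c i = k} \<inter> {i. i < N \<and> k < c i} = {}" by auto
  ultimately show ?thesis unfolding RR_def PP_def
    by (simp add: card_Un_disjoint)
qed

lemma RR_le: "RR N c k \<le> N"
proof -
  have "RR N c k \<le> card {..<N}" unfolding RR_def by (rule card_mono) auto
  thus ?thesis by simp
qed

lemma rank_bij:
  fixes S :: "nat set"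
  assumes "finite S"
  shows "bij_betw (\<lambda>i. card {j\<in>S. j < i}) S {..<card S}"
proof -
  let ?r = "\<lambda>i. card {j\<in>S. j < i}"
  have inj: "inj_on ?r S"
  proof (rule inj_onI)
    fix x y assume xy: "x \<in> S" "y \<in> S" "?r x = ?r y"
    show "x = y"
    proof (rule ccontr)
      assume "x \<noteq> y"
      then consider "x < y" | "y < x" by linarith
      thus False
      proof cases
        case 1
        have "{j\<in>S. j < x} \<subset> {j\<in>S. j < y}" using 1 xy by auto
        hence "?r x < ?r y" using assms by (intro psubset_card_mono) auto
        thus False using xy by simp
      next
        case 2
        have "{j\<in>S. j < y} \<subset> {j\<in>S. j < x}" using 2 xy by auto
        hence "?r y < ?r x" using assms by (intro psubset_card_mono) auto
        thus False using xy by simp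
      qed
    qed
  qed
  have sub: "?r ` S \<subseteq> {..<card S}"
  proof
    fix z assume "z \<in> ?r ` S"
    then obtain x where x: "x \<in> S" "z = ?r x" by auto
    have "{j\<in>S. j < x} \<subset> S" using x by auto
    hence "?r x < card S" using assms by (intro psubset_card_mono) auto
    thus "z \<in> {..<card S}" using x by simp
  qed
  have "card (?r ` S) = card {..<card S}" using card_image[OF inj] by simp
  hence "?r ` S = {..<card S}" using sub by (intro card_subset_eq) auto
  thus ?thesis using inj by (simp add: bij_betw_def)
qed

lemma rank_card:
  fixes S :: "nat set"
  assumes "finite S" "a \<le> card S"
  shows "card {i\<in>S. card {j\<in>S. j < i} < a} = a"
proof -
  let ?r = "\<lambda>i. card {j\<in>S. j < i}"
  have b: "bij_betw ?r S {..<card S}" by (rule rank_bij[OF assms(1)])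
  have "bij_betw ?r {i\<in>S. ?r i < a} {x\<in>{..<card S}. x < a}"
    using b unfolding bij_betw_def inj_on_def by auto
  hence "card {i\<in>S. ?r i < a} = card {x\<in>{..<card S}. x < a}" by (rule bij_betw_same_card)
  also have "{x\<in>{..<card S}. x < a} = {..<a}" using assms(2) by auto
  finally show ?thesis by simp
qed

lemma top_right:
  fixes S :: "nat set"
  assumes "S \<subseteq> {..<N}" "card S = a + b" "i \<in> S" "N - b \<le> i"
  shows "\<not> card {j\<in>S. j < i} < a"
proof -
  have fin: "finite S" using assms(1) finite_subset by blast
  have "S = {j\<in>S. j < i} \<union> {j\<in>S. i \<le> j}" by auto
  hence "card S \<le> card {j\<in>S. j < i} + card {j\<in>S. i \<le> j}" using card_Un_le[of "{j\<in>S. j < i}" "{j\<in>S. i \<le> j}"] by simp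
  moreover have "card {j\<in>S. i \<le> j} \<le> card {i..<N}" using assms(1) by (intro card_mono) auto
  moreover have "card {i..<N} \<le> b" using assms(4) by simp
  ultimately show ?thesis using assms(2) by linarith
qed

lemma bot_left:
  fixes S :: "nat set"
  assumes "i < a"
  shows "card {j\<in>S. j < i} < a"
proof -
  have "card {j\<in>S. j < i} \<le> card {..<i}" by (intro card_mono) auto
  thus ?thesis using assms by simp
qed



lemma fire_R:
  assumes f: "fire t N c s S c'"
  shows "int (RR N c' k) = int (RR N c k) + (if k = s then int (ew t s) else 0)
            - (if k = s - 1 then int (ew t (s - 1)) else 0)"
proof -
  let ?a = "ew t (s - 1)" and ?b = "ew t s"
  let ?r = "\<lambda>i. card {j\<in>S. j < i}"
  define A where "A = {i\<in>S. ?r i < ?a}"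
  have S: "S \<subseteq> {i. i < N \<and> c i = s}" and cS: "card S = ?a + ?b"
    and c': "c' = (\<lambda>i. if i \<in> S then (if ?r i < ?a then s - 1 else s + 1) else c i)"
    using f unfolding fire_def by auto
  have finS: "finite S" using S by (rule finite_subset) auto
  have cA: "card A = ?a" unfolding A_def using rank_card[OF finS, of ?a] cS by simp
  have AS: "A \<subseteq> S" unfolding A_def by auto
  have cSA: "card (S - A) = ?b" using cA cS AS finS by (simp add: card_Diff_subset finite_subset)
  define X where "X = {i. i < N \<and> k < c i}"
  define X' where "X' = {i. i < N \<and> k < c' i}"
  have finX: "finite X" "finite X'" unfolding X_def X'_def by auto
  have eqD: "X - S = X' - S" unfolding X_def X'_def c' by auto
  have X1: "X = (X - S) \<union> (X \<inter> S)" "X' = (X' - S) \<union> (X' \<inter> S)" by auto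
  have cX: "card X = card (X - S) + card (X \<inter> S)"
    using finX by (subst X1(1)) (rule card_Un_disjoint, auto)
  have cX': "card X' = card (X' - S) + card (X' \<inter> S)"
    using finX by (subst X1(2)) (rule card_Un_disjoint, auto)
  have XS: "X \<inter> S = (if k < s then S else {})" unfolding X_def using S by auto
  have X'S: "X' \<inter> S = (if k < s - 1 then S else if k < s + 1 then S - A else {})"
    unfolding X'_def c' A_def using S by auto
  have RRc: "RR N c k = card X" and RRc': "RR N c' k = card X'" unfolding RR_def X_def X'_def by auto
  consider "k < s - 1" | "k = s - 1" | "k = s" | "s < k" by linarith
  thus ?thesis
  proof cases
    case 1 thus ?thesis using RRc RRc' cX cX' XS X'S eqD by auto
  next
    case 2 thus ?thesis using RRc RRc' cX cX' XS X'S eqD cS cSA by auto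
  next
    case 3 thus ?thesis using RRc RRc' cX cX' XS X'S eqD cS cSA by auto
  next
    case 4 thus ?thesis using RRc RRc' cX cX' XS X'S eqD by auto
  qed
qed



lemma fire_basic:
  assumes f: "fire t N c s S c'"
  shows "S \<subseteq> {i. i < N \<and> c i = s}" "card S = ew t (s - 1) + ew t s"
    "\<And>i. i \<notin> S \<Longrightarrow> c' i = c i"
    "\<And>i. i \<in> S \<Longrightarrow> c i = s"
    "\<And>i. i \<in> S \<Longrightarrow> c' i = s - 1 \<or> c' i = s + 1"
    "\<And>i. i \<in> S \<Longrightarrow> N - ew t s \<le> i \<Longrightarrow> c' i = s + 1"
    "\<And>i. i \<in> S \<Longrightarrow> i < ew t (s - 1) \<Longrightarrow> c' i = s - 1"
    "ew t (s - 1) + ew t s \<le> PP N c s"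
proof -
  show S: "S \<subseteq> {i. i < N \<and> c i = s}" and cS: "card S = ew t (s - 1) + ew t s"
    using f unfolding fire_def by auto
  have c': "c' = (\<lambda>i. if i \<in> S then (if card {j\<in>S. j < i} < ew t (s - 1) then s - 1 else s + 1) else c i)"
    using f unfolding fire_def by auto
  show "\<And>i. i \<notin> S \<Longrightarrow> c' i = c i" using c' by simp
  show "\<And>i. i \<in> S \<Longrightarrow> c i = s" using S by auto
  show "\<And>i. i \<in> S \<Longrightarrow> c' i = s - 1 \<or> c' i = s + 1" using c' by simp
  show "\<And>i. i \<in> S \<Longrightarrow> N - ew t s \<le> i \<Longrightarrow> c' i = s + 1"
  proof -
    fix i assume i: "i \<in> S" "N - ew t s \<le> i"
    have "S \<subseteq> {..<N}" using S by auto
    from top_right[OF this cS i] show "c' i = s + 1" using c' i by simp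
  qed
  show "\<And>i. i \<in> S \<Longrightarrow> i < ew t (s - 1) \<Longrightarrow> c' i = s - 1"
    using c' bot_left by simp
  have "card S \<le> PP N c s" unfolding PP_def using S by (intro card_mono) auto
  thus "ew t (s - 1) + ew t s \<le> PP N c s" using cS by simp
qed

lemma fire_R_cases:
  assumes f: "fire t N c s S c'"
  shows "RR N c' s = RR N c s + ew t s"
    "RR N c' (s - 1) + ew t (s - 1) = RR N c (s - 1)"
    "\<And>k. k \<noteq> s \<Longrightarrow> k \<noteq> s - 1 \<Longrightarrow> RR N c' k = RR N c k"
proof -
  show "RR N c' s = RR N c s + ew t s" using fire_R[OF f, of s] by simp
  show "RR N c' (s - 1) + ew t (s - 1) = RR N c (s - 1)" using fire_R[OF f, of "s - 1"] by simp
  fix k assume "k \<noteq> s" "k \<noteq> s - 1"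
  then show "RR N c' k = RR N c k" using fire_R[OF f, of k] by simp
qed

lemma PP_RR: "int (PP N c s) = int (RR N c (s - 1)) - int (RR N c s)"
  using RR_split[of N c s] by simp

definition NN :: "nat \<Rightarrow> nat" where "NN t = 2^(t+2)"

definition Inv :: "nat \<Rightarrow> (nat \<Rightarrow> int) \<Rightarrow> bool" where
 "Inv t c \<longleftrightarrow> (\<exists>g::int \<Rightarrow> nat.
    (\<forall>k. 0 \<le> k \<longrightarrow> RR (NN t) c k = g k * ew t k) \<and>
    (\<forall>k. k < 0 \<longrightarrow> RR (NN t) c k + g k * ew t k = NN t) \<and>
    (\<forall>k. g k \<le> 2) \<and>
    (\<forall>k. (int t + 1 \<le> k \<or> k \<le> - int t - 2) \<longrightarrow> g k \<le> 1) \<and>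
    (\<forall>k. 0 \<le> k \<and> g k = 0 \<longrightarrow> g (k + 1) = 0) \<and>
    (\<forall>k. k < 0 \<and> g k = 0 \<longrightarrow> g (k - 1) = 0) \<and>
    (g 0 = 0 \<longleftrightarrow> g (-1) = 0))"

lemma Inv_init: "Inv t (\<lambda>_. 0)"
proof -
  have "RR (NN t) (\<lambda>_. 0) k = (if k < 0 then NN t else 0)" for k
    unfolding RR_def by auto
  thus ?thesis unfolding Inv_def by (intro exI[of _ "\<lambda>_. 0"]) auto
qed



lemma Inv_step:
  assumes I: "Inv t c" and f: "fire t (NN t) c s S c'"
  shows "Inv t c'"
proof -
  obtain N where Ndef: "N = NN t" by simp
  have N4: "N = 4 * 2^t" using Ndef by (simp add: NN_def power_add)
  from I[unfolded Inv_def, folded Ndef] obtain g :: "int \<Rightarrow> nat" where G: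
    "(\<forall>k. 0 \<le> k \<longrightarrow> RR N c k = g k * ew t k) \<and>
    (\<forall>k. k < 0 \<longrightarrow> RR N c k + g k * ew t k = N) \<and>
    (\<forall>k. g k \<le> 2) \<and>
    (\<forall>k. (int t + 1 \<le> k \<or> k \<le> - int t - 2) \<longrightarrow> g k \<le> 1) \<and>
    (\<forall>k. 0 \<le> k \<and> g k = 0 \<longrightarrow> g (k + 1) = 0) \<and>
    (\<forall>k. k < 0 \<and> g k = 0 \<longrightarrow> g (k - 1) = 0) \<and>
    (g 0 = 0 \<longleftrightarrow> g (-1) = 0)" ..
  have g1: "\<And>k. 0 \<le> k \<Longrightarrow> RR N c k = g k * ew t k" using G by blast
  have g2: "\<And>k. k < 0 \<Longrightarrow> RR N c k + g k * ew t k = N" using G by blast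
  have g3: "\<And>k. g k \<le> 2" using G by blast
  have g4: "\<And>k. (int t + 1 \<le> k \<or> k \<le> - int t - 2) \<Longrightarrow> g k \<le> 1" using G by blast
  have g5: "\<And>k. 0 \<le> k \<Longrightarrow> g k = 0 \<Longrightarrow> g (k + 1) = 0" using G by blast
  have g6: "\<And>k. k < 0 \<Longrightarrow> g k = 0 \<Longrightarrow> g (k - 1) = 0" using G by blast
  have g7: "g 0 = 0 \<longleftrightarrow> g (-1) = 0" using G by blast
  have f': "fire t N c s S c'" using f Ndef by simp
  note fb = fire_basic[OF f']
  note fr = fire_R_cases[OF f']
  have P: "ew t (s - 1) + ew t s \<le> PP N c s" by (rule fb(8))
  have PPi: "RR N c (s - 1) = PP N c s + RR N c s" by (rule RR_split)
  have goal: "Inv t c'" if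
    h1: "\<And>k. 0 \<le> k \<Longrightarrow> RR N c' k = g' k * ew t k" and
    h2: "\<And>k. k < 0 \<Longrightarrow> RR N c' k + g' k * ew t k = N" and
    h3: "\<And>k. g' k \<le> 2" and
    h4: "\<And>k. (int t + 1 \<le> k \<or> k \<le> - int t - 2) \<Longrightarrow> g' k \<le> 1" and
    h5: "\<And>k. 0 \<le> k \<Longrightarrow> g' k = 0 \<Longrightarrow> g' (k + 1) = 0" and
    h6: "\<And>k. k < 0 \<Longrightarrow> g' k = 0 \<Longrightarrow> g' (k - 1) = 0" and
    h7: "g' 0 = 0 \<longleftrightarrow> g' (-1) = 0" for g' :: "int \<Rightarrow> nat"
    unfolding Inv_def Ndef[symmetric]
    apply (intro exI[of _ g'] conjI allI impI)
          apply (erule h1)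
         apply (erule h2)
        apply (rule h3)
       apply (erule h4)
      apply (metis h5)
     apply (metis h6)
    apply (rule h7)
    done
  consider (pos) "1 \<le> s" "s \<le> int t + 1" | (big) "int t + 2 \<le> s" | (zero) "s = 0"
    | (neg) "- int t - 1 \<le> s" "s \<le> -1" | (small) "s \<le> - int t - 2" by linarith
  then show ?thesis
  proof cases
    case pos
    have gs: "g (s - 1) = 2 \<and> g s \<le> 1 \<and> (s = int t + 1 \<longrightarrow> g s = 0)"
    proof (cases "s \<le> int t")
      case True
      define e where "e = ew t s"
      have e0: "0 < e" unfolding e_def by (rule ew_pos)
      have e2: "ew t (s - 1) = 2 * e" unfolding e_def using True pos by (intro ew_step_pos) auto
      have R1: "RR N c (s - 1) = g (s - 1) * (2 * e)" using g1[of "s - 1"] pos e2 by simp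
      have R2: "RR N c s = g s * e" using g1[of s] pos e_def by simp
      have "(3 + g s) * e \<le> (2 * g (s - 1)) * e" using P PPi R1 R2 e2 e_def
        by (simp add: algebra_simps)
      hence "3 + g s \<le> 2 * g (s - 1)" using e0 by simp
      thus ?thesis using g3[of "s - 1"] True by auto
    next
      case False
      hence st: "s = int t + 1" using pos by simp
      have e1: "ew t (s - 1) = 1" using st ew_t by simp
      have e2: "ew t s = 1" using st by (intro ew_big) simp
      have R1: "RR N c (s - 1) = g (s - 1)" using g1[of "s - 1"] pos e1 by simp
      have R2: "RR N c s = g s" using g1[of s] pos e2 by simp
      have "2 + g s \<le> g (s - 1)" using P PPi R1 R2 e1 e2 by simp
      thus ?thesis using g3[of "s - 1"] st by auto
    qed
    define g' where "g' = g(s := g s + 1, s - 1 := 1)"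
    show ?thesis
    proof (rule goal[of g'])
      fix k :: int
      assume k: "0 \<le> k"
      show "RR N c' k = g' k * ew t k"
      proof -
        consider "k = s" | "k = s - 1" | "k \<noteq> s" "k \<noteq> s - 1" by blast
        thus ?thesis
        proof cases
          case 1 thus ?thesis using fr(1) g1[of s] pos unfolding g'_def by simp
        next
          case 2 thus ?thesis using fr(2) g1[of "s - 1"] pos gs unfolding g'_def by simp
        next
          case 3 thus ?thesis using fr(3)[of k] g1[of k] k unfolding g'_def by simp
        qed
      qed
    next
      fix k :: int assume k: "k < 0"
      thus "RR N c' k + g' k * ew t k = N" using fr(3)[of k] g2[of k] pos unfolding g'_def by simp
    next
      fix k show "g' k \<le> 2" using g3[of k] gs unfolding g'_def by auto
    next
      fix k :: int assume "int t + 1 \<le> k \<or> k \<le> - int t - 2"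
      thus "g' k \<le> 1" using g4[of k] gs pos unfolding g'_def by auto
    next
      fix k :: int assume k: "0 \<le> k" "g' k = 0"
      have ks: "k \<noteq> s" "k \<noteq> s - 1" using k unfolding g'_def by (auto split: if_splits)
      hence gk: "g k = 0" using k unfolding g'_def by simp
      have "k + 1 \<noteq> s - 1"
      proof
        assume e: "k + 1 = s - 1"
        have "g (k + 1) = 0" using g5[of k] k gk by blast
        hence "g (s - 1) = 0" by (simp only: e)
        thus False using gs by simp
      qed
      thus "g' (k + 1) = 0" using g5[of k] k gk ks unfolding g'_def by simp
    next
      fix k :: int assume k: "k < 0" "g' k = 0"
      thus "g' (k - 1) = 0" using g6[of k] gs pos unfolding g'_def by (auto split: if_splits)
    next
      show "g' 0 = 0 \<longleftrightarrow> g' (-1) = 0" using g7 gs pos unfolding g'_def by (auto split: if_splits)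
    qed
  next
    case big
    have e1: "ew t (s - 1) = 1" using big by (intro ew_big) simp
    have e2: "ew t s = 1" using big by (intro ew_big) simp
    have R1: "RR N c (s - 1) = g (s - 1)" using g1[of "s - 1"] big e1 by simp
    have "g (s - 1) \<le> 1" using g4[of "s - 1"] big by simp
    hence False using P PPi R1 e1 e2 by simp
    thus ?thesis ..
  next
    case zero
    have e1: "ew t (s - 1) = 2^t" using zero ew_m1 by simp
    have e2: "ew t s = 2^t" using zero ew_0 by simp
    have R1: "RR N c (s - 1) + g (s - 1) * 2^t = N" using g2[of "s - 1"] zero e1 by simp
    have R2: "RR N c s = g s * 2^t" using g1[of s] zero e2 by simp
    have "(g (s - 1) + g s + 2) * 2^t \<le> 4 * 2^t" using P PPi R1 R2 e1 e2 N4
      by (simp add: algebra_simps)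
    hence "g (s - 1) + g s + 2 \<le> 4" by simp
    hence gs: "g (-1) \<le> 1 \<and> g 0 \<le> 1" using g7 zero by auto
    define g' where "g' = g(0 := g 0 + 1, -1 := g (-1) + 1)"
    show ?thesis
    proof (rule goal[of g'])
      fix k :: int
      assume k: "0 \<le> k"
      show "RR N c' k = g' k * ew t k"
      proof (cases "k = 0")
        case True thus ?thesis using fr(1) g1[of 0] zero unfolding g'_def by simp
      next
        case False thus ?thesis using fr(3)[of k] g1[of k] k zero unfolding g'_def by simp
      qed
    next
      fix k :: int assume k: "k < 0"
      show "RR N c' k + g' k * ew t k = N"
      proof (cases "k = -1")
        case True thus ?thesis using fr(2) g2[of "-1"] zero unfolding g'_def by simp
      next
        case False thus ?thesis using fr(3)[of k] g2[of k] k zero unfolding g'_def by simp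
      qed
    next
      fix k show "g' k \<le> 2" using g3[of k] gs unfolding g'_def by auto
    next
      fix k :: int assume "int t + 1 \<le> k \<or> k \<le> - int t - 2"
      thus "g' k \<le> 1" using g4[of k] unfolding g'_def by auto
    next
      fix k :: int assume k: "0 \<le> k" "g' k = 0"
      thus "g' (k + 1) = 0" using g5[of k] unfolding g'_def by (auto split: if_splits)
    next
      fix k :: int assume k: "k < 0" "g' k = 0"
      thus "g' (k - 1) = 0" using g6[of k] unfolding g'_def by (auto split: if_splits)
    next
      show "g' 0 = 0 \<longleftrightarrow> g' (-1) = 0" unfolding g'_def by auto
    qed
  next
    case neg
    have gs: "g s = 2 \<and> g (s - 1) \<le> 1 \<and> (s = - int t - 1 \<longrightarrow> g (s - 1) = 0)"
    proof (cases "- int t \<le> s")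
      case True
      define e where "e = ew t (s - 1)"
      have e0: "0 < e" unfolding e_def by (rule ew_pos)
      have e2: "ew t s = 2 * e" unfolding e_def using True neg by (intro ew_step_neg) auto
      have R1: "RR N c (s - 1) + g (s - 1) * e = N" using g2[of "s - 1"] neg e_def by simp
      have R2: "RR N c s + g s * (2 * e) = N" using g2[of s] neg e2 by simp
      have "(3 + g (s - 1)) * e \<le> (2 * g s) * e" using P PPi R1 R2 e2 e_def
        by (simp add: algebra_simps)
      hence "3 + g (s - 1) \<le> 2 * g s" using e0 by simp
      thus ?thesis using g3[of s] True by auto
    next
      case False
      hence st: "s = - int t - 1" using neg by simp
      have e1: "ew t s = 1" using st ew_mt by simp
      have e2: "ew t (s - 1) = 1" using st by (intro ew_small) simp
      have R1: "RR N c (s - 1) + g (s - 1) = N" using g2[of "s - 1"] neg e2 by simp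
      have R2: "RR N c s + g s = N" using g2[of s] neg e1 by simp
      have "2 + g (s - 1) \<le> g s" using P PPi R1 R2 e1 e2 by simp
      thus ?thesis using g3[of s] st by auto
    qed
    define g' where "g' = g(s := 1, s - 1 := g (s - 1) + 1)"
    show ?thesis
    proof (rule goal[of g'])
      fix k :: int
      assume k: "0 \<le> k"
      show "RR N c' k = g' k * ew t k" using fr(3)[of k] g1[of k] k neg unfolding g'_def by simp
    next
      fix k :: int assume k: "k < 0"
      show "RR N c' k + g' k * ew t k = N"
      proof -
        consider "k = s" | "k = s - 1" | "k \<noteq> s" "k \<noteq> s - 1" by blast
        thus ?thesis
        proof cases
          case 1 thus ?thesis using fr(1) g2[of s] neg gs unfolding g'_def by simp
        next
          case 2
          have "RR N c' (s - 1) + (g (s - 1) + 1) * ew t (s - 1) = N"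
            using fr(2) g2[of "s - 1"] neg by (simp add: add_mult_distrib)
          thus ?thesis using 2 unfolding g'_def by simp
        next
          case 3 thus ?thesis using fr(3)[of k] g2[of k] k unfolding g'_def by simp
        qed
      qed
    next
      fix k show "g' k \<le> 2" using g3[of k] gs unfolding g'_def by auto
    next
      fix k :: int assume kk: "int t + 1 \<le> k \<or> k \<le> - int t - 2"
      show "g' k \<le> 1"
      proof (cases "k = s - 1")
        case True
        hence ss: "s = - int t - 1" using kk neg by auto
        have "s = - int t - 1 \<longrightarrow> g (s - 1) = 0" using gs by (rule conjunct2[THEN conjunct2])
        hence "g (s - 1) = 0" using ss by (rule mp)
        thus ?thesis using True unfolding g'_def by simp
      next
        case False thus ?thesis using g4[of k] kk unfolding g'_def by auto
      qed
    next
      fix k :: int assume k: "0 \<le> k" "g' k = 0"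
      thus "g' (k + 1) = 0" using g5[of k] gs neg unfolding g'_def by (auto split: if_splits)
    next
      fix k :: int assume k: "k < 0" "g' k = 0"
      thus "g' (k - 1) = 0" using g6[of k] g6[of "k - 1"] gs neg unfolding g'_def by (auto split: if_splits)
    next
      show "g' 0 = 0 \<longleftrightarrow> g' (-1) = 0" using g7 gs neg unfolding g'_def by (auto split: if_splits)
    qed
  next
    case small
    have e1: "ew t (s - 1) = 1" using small by (intro ew_small) simp
    have e2: "ew t s = 1" using small by (intro ew_small) simp
    have R1: "RR N c (s - 1) + g (s - 1) = N" using g2[of "s - 1"] small e1 by simp
    have R2: "RR N c s + g s = N" using g2[of s] small e2 by simp
    have "g s \<le> 1" using g4[of s] small by simp
    hence False using P PPi R1 R2 e1 e2 by simp
    thus ?thesis ..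
  qed
qed



definition LInv :: "nat \<Rightarrow> (nat \<Rightarrow> int) \<Rightarrow> bool" where
 "LInv t c \<longleftrightarrow>
   (\<forall>i. NN t - 2^t \<le> i \<and> i < NN t \<longrightarrow> 0 \<le> c i) \<and>
   (\<forall>i. i < 2^t \<longrightarrow> c i \<le> 0) \<and>
   (\<forall>k. 0 \<le> k \<and> k \<le> int t \<and> RR (NN t) c k = 2 * ew t k \<longrightarrow>
        (\<forall>i. NN t - ew t k \<le> i \<and> i < NN t \<longrightarrow> k < c i)) \<and>
   (\<forall>m. - int t - 1 \<le> m \<and> m \<le> -1 \<and> RR (NN t) c m + 2 * ew t m = NN t \<longrightarrow>
        (\<forall>i. i < ew t m \<longrightarrow> c i \<le> m))"

lemma LInv_init: "LInv t (\<lambda>_. 0)"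
proof -
  have "RR (NN t) (\<lambda>_. 0) k = (if k < 0 then NN t else 0)" for k
    unfolding RR_def by auto
  moreover have "0 < ew t k" for k by (rule ew_pos)
  moreover have "0 < NN t" unfolding NN_def by simp
  ultimately show ?thesis unfolding LInv_def by auto
qed

lemma Inv_get:
  assumes "Inv t c"
  obtains g :: "int \<Rightarrow> nat" where
    "\<And>k. 0 \<le> k \<Longrightarrow> RR (NN t) c k = g k * ew t k"
    "\<And>k. k < 0 \<Longrightarrow> RR (NN t) c k + g k * ew t k = NN t"
    "\<And>k. g k \<le> 2"
    "g 0 = 0 \<longleftrightarrow> g (-1) = 0"
proof -
  from assms[unfolded Inv_def] obtain g :: "int \<Rightarrow> nat" where G:
    "(\<forall>k. 0 \<le> k \<longrightarrow> RR (NN t) c k = g k * ew t k) \<and>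
    (\<forall>k. k < 0 \<longrightarrow> RR (NN t) c k + g k * ew t k = NN t) \<and>
    (\<forall>k. g k \<le> 2) \<and>
    (\<forall>k. (int t + 1 \<le> k \<or> k \<le> - int t - 2) \<longrightarrow> g k \<le> 1) \<and>
    (\<forall>k. 0 \<le> k \<and> g k = 0 \<longrightarrow> g (k + 1) = 0) \<and>
    (\<forall>k. k < 0 \<and> g k = 0 \<longrightarrow> g (k - 1) = 0) \<and>
    (g 0 = 0 \<longleftrightarrow> g (-1) = 0)" ..
  show ?thesis
  proof (rule that)
    show "\<And>k. 0 \<le> k \<Longrightarrow> RR (NN t) c k = g k * ew t k" using G by blast
    show "\<And>k. k < 0 \<Longrightarrow> RR (NN t) c k + g k * ew t k = NN t" using G by blast
    show "\<And>k. g k \<le> 2" using G by blast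
    show "g 0 = 0 \<longleftrightarrow> g (-1) = 0" using G by blast
  qed
qed

lemma NN_4: "NN t = 4 * 2^t" unfolding NN_def by (simp add: power_add)

lemma key_pos:
  assumes I: "Inv t c" and L: "LInv t c" and f: "fire t (NN t) c k S c'"
    and k: "0 \<le> k" "k \<le> int t" and R: "1 \<le> RR (NN t) c k"
  shows "\<forall>i. NN t - ew t k \<le> i \<and> i < NN t \<longrightarrow> k < c' i"
proof -
  obtain g where g1: "\<And>k. 0 \<le> k \<Longrightarrow> RR (NN t) c k = g k * ew t k"
    and g2: "\<And>k. k < 0 \<Longrightarrow> RR (NN t) c k + g k * ew t k = NN t"
    and g3: "\<And>k. g k \<le> 2" and g7: "g 0 = 0 \<longleftrightarrow> g (-1) = 0"
    using Inv_get[OF I] by metis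
  note fb = fire_basic[OF f]
  have PPi: "RR (NN t) c (k - 1) = PP (NN t) c k + RR (NN t) c k" by (rule RR_split)
  have gk: "1 \<le> g k" using R g1[OF k(1)] by (cases "g k") auto
  have main: "PP (NN t) c k \<le> ew t (k - 1) + ew t k \<and>
     (\<forall>i. NN t - ew t k \<le> i \<and> i < NN t \<longrightarrow> k \<le> c i)"
  proof (cases "k = 0")
    case True
    have e1: "ew t (k - 1) = 2^t" using True ew_m1 by simp
    have e2: "ew t k = 2^t" using True ew_0 by simp
    have R1: "RR (NN t) c (k - 1) + g (k - 1) * 2^t = NN t" using g2[of "k - 1"] True e1 by simp
    have R2: "RR (NN t) c k = g k * 2^t" using g1[of k] True e2 by simp
    have "1 \<le> g (-1)" using g7 gk True by auto
    hence A: "1 * 2^t \<le> g (k - 1) * 2^t" using True by (intro mult_le_mono1) simp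
    have B: "1 * 2^t \<le> g k * 2^t" using gk by (intro mult_le_mono1) simp
    have "PP (NN t) c k \<le> ew t (k - 1) + ew t k" using PPi R1 R2 e1 e2 NN_4[of t] A B by linarith
    moreover have "\<forall>i. NN t - ew t k \<le> i \<and> i < NN t \<longrightarrow> k \<le> c i"
      using L e2 True unfolding LInv_def by auto
    ultimately show ?thesis by blast
  next
    case False
    hence k1: "1 \<le> k" using k by simp
    define e where "e = ew t k"
    have e0: "0 < e" unfolding e_def by (rule ew_pos)
    have e2: "ew t (k - 1) = 2 * e" unfolding e_def using k k1 by (intro ew_step_pos) auto
    have R1: "RR (NN t) c (k - 1) = g (k - 1) * (2 * e)" using g1[of "k - 1"] k1 e2 by simp
    have R2: "RR (NN t) c k = g k * e" using g1[of k] k e_def by simp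
    have P: "ew t (k - 1) + ew t k \<le> PP (NN t) c k" by (rule fb(8))
    have "(3 + g k) * e \<le> (2 * g (k - 1)) * e" using P PPi R1 R2 e2 e_def
      by (simp add: algebra_simps)
    hence "3 + g k \<le> 2 * g (k - 1)" using e0 by simp
    hence gk1: "g (k - 1) = 2" "g k = 1" using g3[of "k - 1"] gk by auto
    have "PP (NN t) c k = 3 * e" using PPi R1 R2 gk1 by simp
    hence "PP (NN t) c k \<le> ew t (k - 1) + ew t k" using e2 e_def by simp
    moreover have "\<forall>i. NN t - ew t k \<le> i \<and> i < NN t \<longrightarrow> k \<le> c i"
    proof (intro allI impI)
      fix i assume i: "NN t - ew t k \<le> i \<and> i < NN t"
      have RR2: "RR (NN t) c (k - 1) = 2 * ew t (k - 1)" using R1 gk1 e2 by simp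
      have "\<forall>i. NN t - ew t (k - 1) \<le> i \<and> i < NN t \<longrightarrow> k - 1 < c i"
        using L RR2 k k1 unfolding LInv_def by auto
      moreover have "NN t - ew t (k - 1) \<le> i" using i e2 e_def by linarith
      ultimately show "k \<le> c i" using i by auto
    qed
    ultimately show ?thesis by blast
  qed
  have Seq: "S = {i. i < NN t \<and> c i = k}"
  proof (rule card_subset_eq)
    show "finite {i. i < NN t \<and> c i = k}" by simp
    show "S \<subseteq> {i. i < NN t \<and> c i = k}" by (rule fb(1))
    show "card S = card {i. i < NN t \<and> c i = k}"
      using fb(2) fb(8) main unfolding PP_def by simp
  qed
  show ?thesis
  proof (intro allI impI)
    fix i assume i: "NN t - ew t k \<le> i \<and> i < NN t"
    have ci: "k \<le> c i" using main i by blast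
    show "k < c' i"
    proof (cases "c i = k")
      case True
      hence "i \<in> S" using Seq i by simp
      thus ?thesis using fb(6)[of i] i by simp
    next
      case False
      hence "i \<notin> S" using Seq by auto
      thus ?thesis using fb(3)[of i] ci False by simp
    qed
  qed
qed

lemma key_neg:
  assumes I: "Inv t c" and L: "LInv t c" and f: "fire t (NN t) c k S c'"
    and k: "- int t \<le> k" "k \<le> 0" and R: "RR (NN t) c (k - 1) + 1 \<le> NN t"
  shows "\<forall>i. i < ew t (k - 1) \<longrightarrow> c' i < k"
proof -
  obtain g where g1: "\<And>k. 0 \<le> k \<Longrightarrow> RR (NN t) c k = g k * ew t k"
    and g2: "\<And>k. k < 0 \<Longrightarrow> RR (NN t) c k + g k * ew t k = NN t"
    and g3: "\<And>k. g k \<le> 2" and g7: "g 0 = 0 \<longleftrightarrow> g (-1) = 0"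
    using Inv_get[OF I] by metis
  note fb = fire_basic[OF f]
  have PPi: "RR (NN t) c (k - 1) = PP (NN t) c k + RR (NN t) c k" by (rule RR_split)
  have gk: "1 \<le> g (k - 1)" using R g2[of "k - 1"] k by (cases "g (k - 1)") auto
  have main: "PP (NN t) c k \<le> ew t (k - 1) + ew t k \<and>
     (\<forall>i. i < ew t (k - 1) \<longrightarrow> c i \<le> k)"
  proof (cases "k = 0")
    case True
    have e1: "ew t (k - 1) = 2^t" using True ew_m1 by simp
    have e2: "ew t k = 2^t" using True ew_0 by simp
    have R1: "RR (NN t) c (k - 1) + g (k - 1) * 2^t = NN t" using g2[of "k - 1"] True e1 by simp
    have R2: "RR (NN t) c k = g k * 2^t" using g1[of k] True e2 by simp
    have "1 \<le> g 0" using g7 gk True by auto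
    hence A: "1 * 2^t \<le> g k * 2^t" using True by (intro mult_le_mono1) simp
    have B: "1 * 2^t \<le> g (k - 1) * 2^t" using gk by (intro mult_le_mono1) simp
    have "PP (NN t) c k \<le> ew t (k - 1) + ew t k" using PPi R1 R2 e1 e2 NN_4[of t] A B by linarith
    moreover have "\<forall>i. i < ew t (k - 1) \<longrightarrow> c i \<le> k"
      using L e1 True unfolding LInv_def by auto
    ultimately show ?thesis by blast
  next
    case False
    hence k1: "k \<le> -1" using k by simp
    define e where "e = ew t (k - 1)"
    have e0: "0 < e" unfolding e_def by (rule ew_pos)
    have e2: "ew t k = 2 * e" unfolding e_def using k k1 by (intro ew_step_neg) auto
    have R1: "RR (NN t) c (k - 1) + g (k - 1) * e = NN t" using g2[of "k - 1"] k1 e_def by simp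
    have R2: "RR (NN t) c k + g k * (2 * e) = NN t" using g2[of k] k1 e2 by simp
    have P: "ew t (k - 1) + ew t k \<le> PP (NN t) c k" by (rule fb(8))
    have "3 * e + g (k - 1) * e \<le> g k * (2 * e)" using P PPi R1 R2 e2 e_def by linarith
    hence "(3 + g (k - 1)) * e \<le> (2 * g k) * e" by (simp add: algebra_simps)
    hence "3 + g (k - 1) \<le> 2 * g k" using e0 by simp
    hence gk1: "g k = 2" "g (k - 1) = 1" using g3[of k] gk by auto
    have R1': "RR (NN t) c (k - 1) + e = NN t" using R1 gk1 by simp
    have R2': "RR (NN t) c k + 4 * e = NN t" using R2 gk1 by simp
    have "PP (NN t) c k = 3 * e" using PPi R1' R2' by linarith
    hence "PP (NN t) c k \<le> ew t (k - 1) + ew t k" using e2 e_def by simp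
    moreover have "\<forall>i. i < ew t (k - 1) \<longrightarrow> c i \<le> k"
    proof (intro allI impI)
      fix i assume i: "i < ew t (k - 1)"
      have RR2: "RR (NN t) c k + 2 * ew t k = NN t" using R2 gk1 e2 by simp
      have "\<forall>i. i < ew t k \<longrightarrow> c i \<le> k"
        using L RR2 k k1 unfolding LInv_def by auto
      moreover have "i < ew t k" using i e2 e_def by linarith
      ultimately show "c i \<le> k" by auto
    qed
    ultimately show ?thesis by blast
  qed
  have Seq: "S = {i. i < NN t \<and> c i = k}"
  proof (rule card_subset_eq)
    show "finite {i. i < NN t \<and> c i = k}" by simp
    show "S \<subseteq> {i. i < NN t \<and> c i = k}" by (rule fb(1))
    show "card S = card {i. i < NN t \<and> c i = k}"
      using fb(2) fb(8) main unfolding PP_def by simp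
  qed
  have NNb: "ew t (k - 1) \<le> NN t"
  proof -
    have "ew t (k - 1) \<le> PP (NN t) c k" using fb(8) by simp
    also have "PP (NN t) c k \<le> card {..<NN t}" unfolding PP_def by (intro card_mono) auto
    finally show ?thesis by simp
  qed
  show ?thesis
  proof (intro allI impI)
    fix i assume i: "i < ew t (k - 1)"
    have ci: "c i \<le> k" using main i by blast
    show "c' i < k"
    proof (cases "c i = k")
      case True
      hence "i \<in> S" using Seq i NNb by simp
      thus ?thesis using fb(7)[of i] i by simp
    next
      case False
      hence "i \<notin> S" using Seq by auto
      thus ?thesis using fb(3)[of i] ci False by simp
    qed
  qed
qed



lemma LInv_step:
  assumes I: "Inv t c" and L: "LInv t c" and f: "fire t (NN t) c s S c'"
  shows "LInv t c'"
proof -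
  obtain g where g1: "\<And>k. 0 \<le> k \<Longrightarrow> RR (NN t) c k = g k * ew t k"
    and g2: "\<And>k. k < 0 \<Longrightarrow> RR (NN t) c k + g k * ew t k = NN t"
    and g3: "\<And>k. g k \<le> 2"
    using Inv_get[OF I] by metis
  note fb = fire_basic[OF f]
  note fr = fire_R_cases[OF f]
  have L1: "\<And>i. NN t - 2^t \<le> i \<Longrightarrow> i < NN t \<Longrightarrow> 0 \<le> c i" using L unfolding LInv_def by blast
  have L2: "\<And>i. i < 2^t \<Longrightarrow> c i \<le> 0" using L unfolding LInv_def by blast
  have L3: "\<And>k i. 0 \<le> k \<Longrightarrow> k \<le> int t \<Longrightarrow> RR (NN t) c k = 2 * ew t k \<Longrightarrow>
        NN t - ew t k \<le> i \<Longrightarrow> i < NN t \<Longrightarrow> k < c i" using L unfolding LInv_def by blast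
  have L4: "\<And>m i. - int t - 1 \<le> m \<Longrightarrow> m \<le> -1 \<Longrightarrow> RR (NN t) c m + 2 * ew t m = NN t \<Longrightarrow>
        i < ew t m \<Longrightarrow> c i \<le> m" using L unfolding LInv_def by blast
  have Z: "\<forall>i. NN t - 2^t \<le> i \<and> i < NN t \<longrightarrow> 0 \<le> c' i"
  proof (intro allI impI)
    fix i assume i: "NN t - 2^t \<le> i \<and> i < NN t"
    show "0 \<le> c' i"
    proof (cases "i \<in> S")
      case True
      have cs: "c i = s" using fb(4)[OF True] .
      have "0 \<le> s" using L1[of i] i cs by simp
      show ?thesis
      proof (cases "s = 0")
        case True
        thus ?thesis using fb(6)[OF \<open>i \<in> S\<close>] i ew_0[of t] by simp
      next
        case False
        thus ?thesis using fb(5)[OF \<open>i \<in> S\<close>] \<open>0 \<le> s\<close> by auto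
      qed
    next
      case False thus ?thesis using fb(3)[OF False] L1[of i] i by simp
    qed
  qed
  have Z': "\<forall>i. i < 2^t \<longrightarrow> c' i \<le> 0"
  proof (intro allI impI)
    fix i :: nat assume i: "i < 2^t"
    show "c' i \<le> 0"
    proof (cases "i \<in> S")
      case True
      have cs: "c i = s" using fb(4)[OF True] .
      have "s \<le> 0" using L2[of i] i cs by simp
      show ?thesis
      proof (cases "s = 0")
        case True
        thus ?thesis using fb(7)[OF \<open>i \<in> S\<close>] i ew_m1[of t] by simp
      next
        case False
        thus ?thesis using fb(5)[OF \<open>i \<in> S\<close>] \<open>s \<le> 0\<close> by auto
      qed
    next
      case False thus ?thesis using fb(3)[OF False] L2[of i] i by simp
    qed
  qed
  have K: "\<forall>k. 0 \<le> k \<and> k \<le> int t \<and> RR (NN t) c' k = 2 * ew t k \<longrightarrow>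
        (\<forall>i. NN t - ew t k \<le> i \<and> i < NN t \<longrightarrow> k < c' i)"
  proof (intro allI impI)
    fix k i assume k: "0 \<le> k \<and> k \<le> int t \<and> RR (NN t) c' k = 2 * ew t k"
      and i: "NN t - ew t k \<le> i \<and> i < NN t"
    consider "s = k" | "s = k + 1" | "s \<noteq> k" "s \<noteq> k + 1" by blast
    thus "k < c' i"
    proof cases
      case 1
      have "RR (NN t) c k = ew t k" using fr(1) k 1 by simp
      hence "1 \<le> RR (NN t) c k" using ew_pos[of t k] by simp
      thus ?thesis using key_pos[OF I L] f 1 k i by blast
    next
      case 2
      have "RR (NN t) c' k + ew t k = RR (NN t) c k" using fr(2) 2 by simp
      moreover have "RR (NN t) c k \<le> 2 * ew t k" using g1[of k] g3[of k] k
        by (simp add: mult_le_mono1)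
      ultimately have False using k ew_pos[of t k] by simp
      thus ?thesis ..
    next
      case 3
      have "RR (NN t) c k = RR (NN t) c' k" using fr(3)[of k] 3 by auto
      hence ck: "k < c i" using L3[of k i] k i by simp
      show ?thesis
      proof (cases "i \<in> S")
        case True
        have "c i = s" using fb(4)[OF True] .
        thus ?thesis using fb(5)[OF True] ck 3 by auto
      next
        case False thus ?thesis using fb(3)[OF False] ck by simp
      qed
    qed
  qed
  have K': "\<forall>m. - int t - 1 \<le> m \<and> m \<le> -1 \<and> RR (NN t) c' m + 2 * ew t m = NN t \<longrightarrow>
        (\<forall>i. i < ew t m \<longrightarrow> c' i \<le> m)"
  proof (intro allI impI)
    fix m i assume m: "- int t - 1 \<le> m \<and> m \<le> -1 \<and> RR (NN t) c' m + 2 * ew t m = NN t"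
      and i: "i < ew t m"
    consider "s = m + 1" | "s = m" | "s \<noteq> m" "s \<noteq> m + 1" by blast
    thus "c' i \<le> m"
    proof cases
      case 1
      have "RR (NN t) c' m + ew t m = RR (NN t) c m" using fr(2) 1 by simp
      hence "RR (NN t) c (s - 1) + 1 \<le> NN t" using m 1 ew_pos[of t m] by simp
      hence "\<forall>i. i < ew t (s - 1) \<longrightarrow> c' i < s" using key_neg[OF I L f] m 1 by simp
      thus ?thesis using i 1 by auto
    next
      case 2
      have "RR (NN t) c' m = RR (NN t) c m + ew t m" using fr(1) 2 by simp
      moreover have "RR (NN t) c m + g m * ew t m = NN t" using g2[of m] m by simp
      moreover have "g m * ew t m \<le> 2 * ew t m" using g3[of m] by (simp add: mult_le_mono1)
      ultimately have False using m ew_pos[of t m] by simp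
      thus ?thesis ..
    next
      case 3
      have "RR (NN t) c m = RR (NN t) c' m" using fr(3)[of m] 3 by auto
      hence ck: "c i \<le> m" using L4[of m i] m i by simp
      show ?thesis
      proof (cases "i \<in> S")
        case True
        have "c i = s" using fb(4)[OF True] .
        thus ?thesis using fb(5)[OF True] ck 3 by auto
      next
        case False thus ?thesis using fb(3)[OF False] ck by simp
      qed
    qed
  qed
  show ?thesis unfolding LInv_def using Z Z' K K' by blast
qed

lemma pers_pos:
  assumes f: "fire t N c s S c'" and R: "1 \<le> RR N c k"
  shows "1 \<le> RR N c' k"
proof -
  note fb = fire_basic[OF f]
  note fr = fire_R_cases[OF f]
  consider "s = k" | "s = k + 1" | "s \<noteq> k" "s \<noteq> k + 1" by blast
  thus ?thesis
  proof cases
    case 1 thus ?thesis using fr(1) R by simp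
  next
    case 2
    have a: "RR N c' k + ew t k = RR N c k" using fr(2) 2 by simp
    have b: "RR N c k = PP N c (k + 1) + RR N c (k + 1)" using RR_split[of N c "k + 1"] by simp
    have c: "ew t k + ew t (k + 1) \<le> PP N c (k + 1)" using fb(8) 2 by simp
    have "0 < ew t (k + 1)" by (rule ew_pos)
    thus ?thesis using a b c by linarith
  next
    case 3 thus ?thesis using fr(3)[of k] R by auto
  qed
qed

lemma pers_neg:
  assumes f: "fire t N c s S c'" and R: "RR N c k + 1 \<le> N"
  shows "RR N c' k + 1 \<le> N"
proof -
  note fb = fire_basic[OF f]
  note fr = fire_R_cases[OF f]
  consider "s = k" | "s = k + 1" | "s \<noteq> k" "s \<noteq> k + 1" by blast
  thus ?thesis
  proof cases
    case 1
    have a: "RR N c' k = RR N c k + ew t k" using fr(1) 1 by simp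
    have b: "RR N c (k - 1) = PP N c k + RR N c k" by (rule RR_split)
    have c: "ew t (k - 1) + ew t k \<le> PP N c k" using fb(8) 1 by simp
    have d: "RR N c (k - 1) \<le> N" by (rule RR_le)
    have "0 < ew t (k - 1)" by (rule ew_pos)
    thus ?thesis using a b c d by linarith
  next
    case 2
    have "RR N c' k + ew t k = RR N c k" using fr(2) 2 by simp
    thus ?thesis using R by linarith
  next
    case 3 thus ?thesis using fr(3)[of k] R by auto
  qed
qed

theorem lemma3p6:
  fixes t :: nat and moves :: "(int \<times> nat set) list" and cs :: "(nat \<Rightarrow> int) list"
  assumes "complete_run t (2 ^ (t + 2)) moves cs"
  shows "(\<forall>k j n. 0 \<le> k \<and> k \<le> int t \<and> 2 \<le> j \<and> int j \<le> 2 * (int t - k) + 3 \<and>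
            n < length moves \<and> fst (moves ! n) = k \<and>
            card {m. m \<le> n \<and> fst (moves ! m) = k} = j \<longrightarrow>
            (\<forall>i. 2 ^ (t + 2) - 2 ^ nat (int t - k) \<le> i \<and> i < 2 ^ (t + 2) \<longrightarrow>
                 (cs ! Suc n) i > k))
       \<and> (\<forall>k j n. - int t \<le> k \<and> k \<le> 0 \<and> 2 \<le> j \<and> int j \<le> 2 * (int t + k) + 3 \<and>
            n < length moves \<and> fst (moves ! n) = k \<and>
            card {m. m \<le> n \<and> fst (moves ! m) = k} = j \<longrightarrow>
            (\<forall>i. i < 2 ^ nat (int t + k) \<longrightarrow> (cs ! Suc n) i < k))"
proof -
  have c0: "cs ! 0 = (\<lambda>_. 0)" using assms unfolding complete_run_def by blast
  have F: "\<And>n. n < length moves \<Longrightarrow>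
      fire t (NN t) (cs ! n) (fst (moves ! n)) (snd (moves ! n)) (cs ! Suc n)"
    using assms unfolding complete_run_def NN_def by blast
  have invs: "n \<le> length moves \<Longrightarrow> Inv t (cs ! n) \<and> LInv t (cs ! n)" for n
  proof (induction n)
    case 0 thus ?case using c0 Inv_init LInv_init by simp
  next
    case (Suc n)
    hence n: "n < length moves" by simp
    have "Inv t (cs ! n) \<and> LInv t (cs ! n)" using Suc by simp
    thus ?case using Inv_step LInv_step F[OF n] by blast
  qed
  have persp: "1 \<le> RR (NN t) (cs ! n) (fst (moves ! m))"
    if m: "m < length moves" and mn: "Suc m \<le> n" and n: "n \<le> length moves" for m n
    using mn n
  proof (induction n rule: dec_induct)
    case base
    show ?case using fire_R_cases(1)[OF F[OF m]] ew_pos[of t "fst (moves ! m)"] by simp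
  next
    case (step n)
    thus ?case using pers_pos[OF F] by simp
  qed
  have persn: "RR (NN t) (cs ! n) (fst (moves ! m) - 1) + 1 \<le> NN t"
    if m: "m < length moves" and mn: "Suc m \<le> n" and n: "n \<le> length moves" for m n
    using mn n
  proof (induction n rule: dec_induct)
    case base
    show ?case using fire_R_cases(2)[OF F[OF m]] ew_pos[of t "fst (moves ! m) - 1"]
      RR_le[of "NN t" "cs ! m" "fst (moves ! m) - 1"] by simp
  next
    case (step n)
    thus ?case using pers_neg[OF F] by simp
  qed
  have earlier: "\<exists>m<n. fst (moves ! m) = k"
    if "2 \<le> card {m. m \<le> n \<and> fst (moves ! m) = k}" for n k
  proof (rule ccontr)
    assume "\<not> (\<exists>m<n. fst (moves ! m) = k)"
    hence "{m. m \<le> n \<and> fst (moves ! m) = k} \<subseteq> {n}" by (auto simp: le_less)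
    hence "card {m. m \<le> n \<and> fst (moves ! m) = k} \<le> card {n}" by (intro card_mono) auto
    thus False using that by simp
  qed
  show ?thesis
  proof (intro conjI allI impI)
    fix k :: int and j n i :: nat
    assume h: "0 \<le> k \<and> k \<le> int t \<and> 2 \<le> j \<and> int j \<le> 2 * (int t - k) + 3 \<and>
            n < length moves \<and> fst (moves ! n) = k \<and>
            card {m. m \<le> n \<and> fst (moves ! m) = k} = j"
      and i: "2 ^ (t + 2) - 2 ^ nat (int t - k) \<le> i \<and> i < 2 ^ (t + 2)"
    obtain m where m: "m < n" "fst (moves ! m) = k" using earlier[of n k] h by blast
    have R: "1 \<le> RR (NN t) (cs ! n) k" using persp[of m n] m h by simp
    have IL: "Inv t (cs ! n) \<and> LInv t (cs ! n)" using invs[of n] h by simp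
    have "\<forall>i. NN t - ew t k \<le> i \<and> i < NN t \<longrightarrow> k < (cs ! Suc n) i"
      using key_pos[of t "cs ! n" k "snd (moves ! n)" "cs ! Suc n"] IL F[of n] h R by blast
    moreover have "ew t k = 2 ^ nat (int t - k)" using h by (intro ew_pos_range) auto
    ultimately show "(cs ! Suc n) i > k" using i unfolding NN_def by simp
  next
    fix k :: int and j n i :: nat
    assume h: "- int t \<le> k \<and> k \<le> 0 \<and> 2 \<le> j \<and> int j \<le> 2 * (int t + k) + 3 \<and>
            n < length moves \<and> fst (moves ! n) = k \<and>
            card {m. m \<le> n \<and> fst (moves ! m) = k} = j"
      and i: "i < 2 ^ nat (int t + k)"
    obtain m where m: "m < n" "fst (moves ! m) = k" using earlier[of n k] h by blast
    have R: "RR (NN t) (cs ! n) (k - 1) + 1 \<le> NN t" using persn[of m n] m h by simp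
    have IL: "Inv t (cs ! n) \<and> LInv t (cs ! n)" using invs[of n] h by simp
    have "\<forall>i. i < ew t (k - 1) \<longrightarrow> (cs ! Suc n) i < k"
      using key_neg[of t "cs ! n" k "snd (moves ! n)" "cs ! Suc n"] IL F[of n] h R by blast
    moreover have "ew t (k - 1) = 2 ^ nat (int t + k)"
    proof -
      have "ew t (k - 1) = 2 ^ nat (int t + (k - 1) + 1)" using h by (intro ew_neg) auto
      thus ?thesis by simp
    qed
    ultimately show "(cs ! Suc n) i < k" using i by simp
  qed
qed

end
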